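(* Let $u$ be the exact solution of $\dot u=f(u,t)$, $t\in(0,T]$, $u(0)=u_0$, and let $U$ be a piecewise polynomial approximation of $u$ ($U_i|_{I_{ij}}$ a polynomial for each $i,j$, with the convention $U_i(0^-)=u_i(0)$), right-continuous at $T$, with $e=U-u$ and $e(T)\ne0$. Let $\varphi$ solve the dual problem $-\dot\varphi=J^*(u,U,\cdot)\varphi$ on $[0,T)$ with $\varphi(T)=e(T)/\|e(T)\|$ (i.e. $g=0$). Then $$\|e(T)\|=\sum_{i=1}^N\sum_{j=1}^{M_i}\Big[\int_{I_{ij}}R_i(U,\cdot)\varphi_i\,dt+[U_i]_{i,j-1}\varphi_i(t_{i,j-1})\Big],$$ where $R_i(U,t)=\dot U_i(t)-f_i(U(t),t)$ on $(t_{i,j-1},t_{ij})$.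
   Context: $f:\mathbb{R}^N\times(0,T]\to\mathbb{R}^N$ is bounded, Lipschitz and continuously differentiable in $u$; $\|\cdot\|$ is the Euclidean norm. For each component $i$ there is a partition $0=t_{i0}<\dots<t_{iM_i}=T$ with $I_{ij}=(t_{i,j-1},t_{ij}]$; jumps are $[U_i]_{ij}=U_i(t_{ij}^+)-U_i(t_{ij}^-)$. $J^*(v_1,v_2,t)=\big(\int_0^1\frac{\partial f}{\partial u}(s v_1+(1-s)v_2,t)\,ds\big)^{*}$ with $^*$ the transpose. *)

theory Defs
  imports "HOL-Analysis.Analysis" "HOL-Computational_Algebra.Polynomial"
begin

text \<open>Transpose of the averaged Jacobian: J^*(v1,v2,t) = (int_0^1 Df(s v1 + (1-s) v2, t) ds)^T,
  where Df v t is the Jacobian matrix of f(.,t) at v.\<close>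
definition Jstar :: "(real^'n \<Rightarrow> real \<Rightarrow> real^'n^'n) \<Rightarrow> real^'n \<Rightarrow> real^'n \<Rightarrow> real \<Rightarrow> real^'n^'n" where
  "Jstar Df v1 v2 t = transpose (integral {0..1} (\<lambda>s. Df (s *\<^sub>R v1 + (1 - s) *\<^sub>R v2) t))"

definition jump :: "(real \<Rightarrow> real^'n) \<Rightarrow> real^'n \<Rightarrow> 'n \<Rightarrow> nat \<Rightarrow> real \<Rightarrow> real" where
  "jump U u0 i k a =
     Lim (at_right a) (\<lambda>s. U s $ i) -
     (if k = 0 then u0 $ i else Lim (at_left a) (\<lambda>s. U s $ i))"

definition residual :: "(real^'n \<Rightarrow> real \<Rightarrow> real^'n) \<Rightarrow> (real \<Rightarrow> real^'n) \<Rightarrow> 'n \<Rightarrow> real \<Rightarrow> real" where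
  "residual f U i t = deriv (\<lambda>s. U s $ i) t - f (U t) t $ i"

end

theory Submission
  imports Defs
begin

lemma part_le:
  fixes \<tau> :: "nat \<Rightarrow> real"
  assumes "\<And>j. j < m \<Longrightarrow> \<tau> j < \<tau> (Suc j)" "j \<le> k" "k \<le> m"
  shows "\<tau> j \<le> \<tau> k"
  using assms(2,3)
proof (induction k)
  case 0 then show ?case by simp
next
  case (Suc k)
  show ?case
  proof (cases "j = Suc k")
    case False
    then have "\<tau> j \<le> \<tau> k" using Suc by simp
    also have "\<tau> k < \<tau> (Suc k)" using assms(1) Suc by simp
    finally show ?thesis by simp
  qed simp
qed

lemma part_less:
  fixes \<tau> :: "nat \<Rightarrow> real"
  assumes "\<And>j. j < m \<Longrightarrow> \<tau> j < \<tau> (Suc j)" "j < k" "k \<le> m"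
  shows "\<tau> j < \<tau> k"
proof -
  have "\<tau> j < \<tau> (Suc j)" using assms by simp
  also have "\<tau> (Suc j) \<le> \<tau> k" using part_le[of m \<tau> "Suc j" k] assms by simp
  finally show ?thesis .
qed

lemma part_locate:
  fixes \<tau> :: "nat \<Rightarrow> real"
  assumes "\<tau> 0 < t" "t \<le> \<tau> m"
  shows "\<exists>j\<in>{1..m}. \<tau> (j - 1) < t \<and> t \<le> \<tau> j"
proof -
  define j where "j = (LEAST j. t \<le> \<tau> j)"
  have tj: "t \<le> \<tau> j" unfolding j_def by (rule LeastI[of _ m]) (use assms in auto)
  have jm: "j \<le> m" unfolding j_def by (rule Least_le) (use assms in auto)
  have j0: "j \<noteq> 0" using tj assms by (metis not_le)
  have "\<not> t \<le> \<tau> (j - 1)" unfolding j_def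
    by (rule not_less_Least) (use j0 j_def in auto)
  then show ?thesis using tj jm j0 by (intro bexI[of _ j]) auto
qed

lemma part_integral:
  fixes \<tau> :: "nat \<Rightarrow> real" and g :: "real \<Rightarrow> real"
  assumes "\<And>j. j < m \<Longrightarrow> \<tau> j < \<tau> (Suc j)"
    and "\<And>j. j \<in> {1..m} \<Longrightarrow> g integrable_on {\<tau> (j - 1)..\<tau> j}"
  shows "(g has_integral (\<Sum>j = 1..m. integral {\<tau> (j - 1)..\<tau> j} g)) {\<tau> 0..\<tau> m}"
  using assms
proof (induction m)
  case 0 then show ?case by (simp add: has_integral_refl)
next
  case (Suc m)
  have IH: "(g has_integral (\<Sum>j = 1..m. integral {\<tau> (j - 1)..\<tau> j} g)) {\<tau> 0..\<tau> m}"
    using Suc by auto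
  have last: "(g has_integral integral {\<tau> m..\<tau> (Suc m)} g) {\<tau> m..\<tau> (Suc m)}"
    using Suc.prems(2)[of "Suc m"] by (simp add: integrable_integral)
  have "\<tau> 0 \<le> \<tau> m" using part_le[of "Suc m" \<tau> 0 m] Suc.prems(1) by simp
  moreover have "\<tau> m \<le> \<tau> (Suc m)" using Suc.prems(1)[of m] by simp
  ultimately show ?case using has_integral_combine[OF _ _ IH last] by simp
qed

lemma bl_mv: "bounded_linear (\<lambda>M::real^'n^'m. M *v c)"
proof -
  have "linear (\<lambda>M::real^'n^'m. M *v c)"
    by (rule linearI) (auto simp: matrix_vector_mult_def vec_eq_iff sum.distrib algebra_simps sum_distrib_left)
  then show ?thesis by (simp add: linear_conv_bounded_linear)
qed

lemma J_identity:
  fixes f :: "real^'n \<Rightarrow> real^'n" and Df :: "real^'n \<Rightarrow> real^'n^'n"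
  assumes fd: "\<And>v. (f has_derivative (\<lambda>h. Df v *v h)) (at v)"
    and Dc: "continuous_on UNIV Df"
  shows "(b - a) \<bullet> (transpose (integral {0..1} (\<lambda>s. Df (s *\<^sub>R a + (1 - s) *\<^sub>R b))) *v p)
       = (f b - f a) \<bullet> p"
proof -
  define A where "A = integral {0..1} (\<lambda>s. Df (s *\<^sub>R a + (1 - s) *\<^sub>R b))"
  have cont: "continuous_on {0..1} (\<lambda>s. Df (s *\<^sub>R a + (1 - s) *\<^sub>R b))"
    by (rule continuous_on_compose2[OF Dc]) (auto intro!: continuous_intros)
  have int: "(\<lambda>s. Df (s *\<^sub>R a + (1 - s) *\<^sub>R b)) integrable_on {0..1}"
    using cont integrable_continuous_real by blast
  have "A *v (a - b) = integral {0..1} (\<lambda>s. Df (s *\<^sub>R a + (1 - s) *\<^sub>R b) *v (a - b))"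
    unfolding A_def using integral_linear[OF int bl_mv, of "a - b"] by (simp add: o_def)
  also have "\<dots> = f (1 *\<^sub>R a + (1 - 1) *\<^sub>R b) - f (0 *\<^sub>R a + (1 - 0) *\<^sub>R b)"
  proof (rule integral_unique, rule fundamental_theorem_of_calculus)
    show "(0::real) \<le> 1" by simp
    fix s :: real assume "s \<in> {0..1}"
    have g: "((\<lambda>s. s *\<^sub>R a + (1 - s) *\<^sub>R b) has_derivative (\<lambda>h. h *\<^sub>R (a - b))) (at s within {0..1})"
      by (auto intro!: derivative_eq_intros simp: algebra_simps)
    have "((\<lambda>s. f (s *\<^sub>R a + (1 - s) *\<^sub>R b)) has_derivative (\<lambda>h. Df (s *\<^sub>R a + (1 - s) *\<^sub>R b) *v (h *\<^sub>R (a - b)))) (at s within {0..1})"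
      using has_derivative_compose[OF g fd] by (simp add: o_def)
    then show "((\<lambda>s. f (s *\<^sub>R a + (1 - s) *\<^sub>R b)) has_vector_derivative Df (s *\<^sub>R a + (1 - s) *\<^sub>R b) *v (a - b)) (at s within {0..1})"
      unfolding has_vector_derivative_def by (simp add: matrix_vector_mult_scaleR)
  qed
  finally have eq: "A *v (a - b) = f a - f b" by simp
  have "A *v (b - a) = f b - f a"
    using eq by (metis matrix_vector_mult_diff_distrib minus_diff_eq)
  moreover have "(b - a) \<bullet> (transpose A *v p) = (A *v (b - a)) \<bullet> p"
    by (metis dot_lmul_matrix inner_commute transpose_matrix_vector transpose_transpose vector_transpose_matrix)
  ultimately show ?thesis unfolding A_def by simp
qed


theorem corollary6p2:
  fixes f :: "real^'n \<Rightarrow> real \<Rightarrow> real^'n"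
    and Df :: "real^'n \<Rightarrow> real \<Rightarrow> real^'n^'n"
    and T :: real and u0 :: "real^'n"
    and u U \<phi> :: "real \<Rightarrow> real^'n"
    and M :: "'n \<Rightarrow> nat" and tp :: "'n \<Rightarrow> nat \<Rightarrow> real"
  assumes T_pos: "0 < T"
    and f_bounded: "\<exists>B. \<forall>v. \<forall>t\<in>{0<..T}. norm (f v t) \<le> B"
    and f_lipschitz: "\<exists>L. L-lipschitz_on (UNIV \<times> {0<..T}) (\<lambda>(v, t). f v t)"
    and f_deriv: "\<And>v t. t \<in> {0<..T} \<Longrightarrow> ((\<lambda>x. f x t) has_derivative (\<lambda>h. Df v t *v h)) (at v)"
    and Df_cont: "\<And>t. t \<in> {0<..T} \<Longrightarrow> continuous_on UNIV (\<lambda>v. Df v t)"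
    and u_cont: "continuous_on {0..T} u"
    and u_init: "u 0 = u0"
    and u_ode: "\<And>t. t \<in> {0<..T} \<Longrightarrow> (u has_vector_derivative f (u t) t) (at t within {0..T})"
    and part_start: "\<And>i. tp i 0 = 0"
    and part_end: "\<And>i. tp i (M i) = T"
    and part_mono: "\<And>i j. j < M i \<Longrightarrow> tp i j < tp i (Suc j)"
    and U_poly: "\<And>i j. j \<in> {1..M i} \<Longrightarrow>
        \<exists>p :: real poly. \<forall>s\<in>{tp i (j - 1)<..tp i j}. U s $ i = poly p s"
    and eT_nz: "U T - u T \<noteq> 0"
    and phi_cont: "continuous_on {0..T} \<phi>"
    and phi_final: "\<phi> T = (1 / norm (U T - u T)) *\<^sub>R (U T - u T)"
    and phi_ode: "\<And>t. t \<in> {0<..<T} - {tp i j | i j. j \<le> M i} \<Longrightarrow>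
        (\<phi> has_vector_derivative - (Jstar Df (u t) (U t) t *v \<phi> t)) (at t)"
  shows "norm (U T - u T) =
    (\<Sum>i\<in>UNIV. \<Sum>j = 1..M i.
       integral {tp i (j - 1)..tp i j} (\<lambda>t. residual f U i t * \<phi> t $ i)
       + jump U u0 i (j - 1) (tp i (j - 1)) * \<phi> (tp i (j - 1)) $ i)"
proof -
  define S where "S = {tp i j | i j. j \<le> M i}"
  have finS: "finite S"
  proof -
    have "S \<subseteq> (\<Union>i. tp i ` {..M i})" unfolding S_def by auto
    then show ?thesis by (rule finite_subset) auto
  qed
  have le: "tp i j \<le> tp i k" if "j \<le> k" "k \<le> M i" for i j k
    using part_le[of "M i" "tp i" j k] part_mono that by blast
  have lt: "tp i j < tp i k" if "j < k" "k \<le> M i" for i j k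
    using part_less[of "M i" "tp i" j k] part_mono that by blast
  have tp0: "0 \<le> tp i j" "tp i j \<le> T" if "j \<le> M i" for i j
    using le[of 0 j i] le[of j "M i" i] that part_start part_end by auto
  define P where "P i j = (SOME p. \<forall>s\<in>{tp i (j - 1)<..tp i j}. U s $ i = poly p s)" for i j
  have P: "U s $ i = poly (P i j) s" if "j \<in> {1..M i}" "s \<in> {tp i (j - 1)<..tp i j}" for i j s
  proof -
    have "\<forall>s\<in>{tp i (j - 1)<..tp i j}. U s $ i = poly (P i j) s"
      unfolding P_def by (rule someI_ex) (rule U_poly[OF that(1)])
    then show ?thesis using that(2) by blast
  qed
  define jmp where "jmp i k = jump U u0 i k (tp i k)" for i k
  have jmp: "jmp i k = poly (P i (Suc k)) (tp i k) - (if k = 0 then u0 $ i else poly (P i k) (tp i k))"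
    if "k < M i" for i k
  proof -
    have kk: "Suc k \<in> {1..M i}" using that by simp
    have r: "((\<lambda>s. U s $ i) \<longlongrightarrow> poly (P i (Suc k)) (tp i k)) (at_right (tp i k))"
    proof -
      have ev: "eventually (\<lambda>s. poly (P i (Suc k)) s = U s $ i) (at_right (tp i k))"
        unfolding eventually_at_right_field
        using P[OF kk] lt[of k "Suc k" i] that by (intro exI[of _ "tp i (Suc k)"]) auto
      have "((\<lambda>s. poly (P i (Suc k)) s) \<longlongrightarrow> poly (P i (Suc k)) (tp i k)) (at_right (tp i k))"
        by (intro tendsto_intros)
      then show ?thesis using tendsto_cong[OF ev] by simp
    qed
    have rl: "Lim (at_right (tp i k)) (\<lambda>s. U s $ i) = poly (P i (Suc k)) (tp i k)"
      by (rule tendsto_Lim[OF _ r]) simp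
    show ?thesis
    proof (cases "k = 0")
      case True then show ?thesis using rl unfolding jmp_def jump_def by simp
    next
      case False
      have k1: "k \<in> {1..M i}" using that False by simp
      have l: "((\<lambda>s. U s $ i) \<longlongrightarrow> poly (P i k) (tp i k)) (at_left (tp i k))"
      proof -
        have ev: "eventually (\<lambda>s. poly (P i k) s = U s $ i) (at_left (tp i k))"
          unfolding eventually_at_left_field
          using P[OF k1] lt[of "k - 1" k i] that False by (intro exI[of _ "tp i (k - 1)"]) auto
        have "((\<lambda>s. poly (P i k) s) \<longlongrightarrow> poly (P i k) (tp i k)) (at_left (tp i k))"
          by (intro tendsto_intros)
        then show ?thesis using tendsto_cong[OF ev] by simp
      qed
      have ll: "Lim (at_left (tp i k)) (\<lambda>s. U s $ i) = poly (P i k) (tp i k)"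
        by (rule tendsto_Lim[OF _ l]) simp
      show ?thesis using rl ll False unfolding jmp_def jump_def by simp
    qed
  qed
  define Hj where "Hj i j s = (poly (P i j) s - u s $ i) * \<phi> s $ i - (\<Sum>k<j. jmp i k * \<phi> (tp i k) $ i)" for i j s
  define H where "H i s = (if s = 0 then 0 else (U s $ i - u s $ i) * \<phi> s $ i
      - (\<Sum>k\<in>{k. k < M i \<and> tp i k < s}. jmp i k * \<phi> (tp i k) $ i))" for i s
  have C1a: "H i s = Hj i j s" if "j \<in> {1..M i}" "s \<in> {tp i (j - 1)<..tp i j}" for i j s
  proof -
    have "0 \<le> tp i (j - 1)" using that tp0[of "j - 1" i] by auto
    then have s0: "s \<noteq> 0" using that by auto
    have set: "{k. k < M i \<and> tp i k < s} = {..<j}"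
    proof (intro set_eqI iffI)
      fix k assume "k \<in> {k. k < M i \<and> tp i k < s}"
      then have "k < M i" "tp i k < s" by auto
      then show "k \<in> {..<j}" using that le[of j k i] by (cases "k < j") auto
    next
      fix k assume "k \<in> {..<j}"
      then have "k \<le> j - 1" "j - 1 \<le> M i" "k < M i" using that by auto
      then show "k \<in> {k. k < M i \<and> tp i k < s}" using that le[of k "j - 1" i] by force
    qed
    show ?thesis unfolding H_def Hj_def using s0 set P[OF that] by simp
  qed
  have C1: "H i s = Hj i j s" if "j \<in> {1..M i}" "s \<in> {tp i (j - 1)..tp i j}" for i j s
  proof (cases "s = tp i (j - 1)")
    case False
    then show ?thesis using C1a[OF that(1)] that(2) by auto
  next
    case True
    show ?thesis
    proof (cases "j = 1")
      case j1: True
      then have s0: "s = 0" using True part_start by simp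
      have "jmp i 0 = poly (P i 1) 0 - u0 $ i" using jmp[of 0 i] that j1 part_start by simp
      then show ?thesis unfolding H_def Hj_def using s0 j1 u_init part_start by (simp add: algebra_simps flip: distrib_right)
    next
      case False
      have j1: "j - 1 \<in> {1..M i}" using that False by auto
      have A: "H i s = Hj i (j - 1) s"
        using C1a[OF j1] True lt[of "j - 1 - 1" "j - 1" i] that False by auto
      have B: "jmp i (j - 1) = poly (P i j) s - poly (P i (j - 1)) s"
        using jmp[of "j - 1" i] that False True by force
      have C: "{..<j} = insert (j - 1) {..<j - 1}" using that by auto
      have "Hj i j s = Hj i (j - 1) s"
        using B unfolding Hj_def C True by (simp add: algebra_simps) (metis distrib_left mult.commute)
      then show ?thesis using A by simp
    qed
  qed
  have Hcont: "continuous_on {0..T} (H i)" for i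
  proof -
    have pieces: "continuous_on (\<Union>j\<in>{1..M i}. {tp i (j - 1)..tp i j}) (H i)"
    proof (rule continuous_on_closed_Union)
      fix j assume j: "j \<in> {1..M i}"
      have "j - 1 \<le> M i" using j by (meson atLeastAtMost_iff diff_le_self order_trans)
      then have sub: "{tp i (j - 1)..tp i j} \<subseteq> {0..T}" using tp0[of "j - 1" i] tp0[of j i] j by auto
      have "continuous_on {tp i (j - 1)..tp i j} (Hj i j)"
        unfolding Hj_def
        by (intro continuous_intros continuous_on_subset[OF u_cont sub] continuous_on_subset[OF phi_cont sub])
      then show "continuous_on {tp i (j - 1)..tp i j} (H i)"
        by (rule continuous_on_eq) (use C1[OF j] in auto)
    qed auto
    have "(\<Union>j\<in>{1..M i}. {tp i (j - 1)..tp i j}) = {0..T}"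
    proof (intro equalityI subsetI)
      fix s assume "s \<in> (\<Union>j\<in>{1..M i}. {tp i (j - 1)..tp i j})"
      then obtain j where "j \<in> {1..M i}" "s \<in> {tp i (j - 1)..tp i j}" by auto
      moreover have "j - 1 \<le> M i" using \<open>j \<in> {1..M i}\<close> by (meson atLeastAtMost_iff diff_le_self order_trans)
      ultimately show "s \<in> {0..T}" using tp0[of "j - 1" i] tp0[of j i] by auto
    next
      fix s assume s: "s \<in> {0..T}"
      show "s \<in> (\<Union>j\<in>{1..M i}. {tp i (j - 1)..tp i j})"
      proof (cases "s = 0")
        case True
        have "M i \<noteq> 0" using part_start part_end T_pos by (metis less_irrefl)
        then show ?thesis using True part_start tp0[of 1 i] by (intro UN_I[of 1]) auto
      next
        case False
        then obtain j where "j \<in> {1..M i}" "tp i (j - 1) < s" "s \<le> tp i j"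
          using part_locate[of "tp i" s "M i"] s part_start part_end by force
        then show ?thesis by (intro UN_I[of j]) auto
      qed
    qed
    then show ?thesis using pieces by simp
  qed
  define G where "G s = (\<Sum>i\<in>UNIV. H i s)" for s
  have Gcont: "continuous_on {0..T} G"
    unfolding G_def by (intro continuous_intros Hcont)
  have Gder: "(G has_vector_derivative (\<Sum>i\<in>UNIV. residual f U i t * \<phi> t $ i)) (at t)"
    if t: "t \<in> {0<..<T} - S" for t
  proof -
    define Jm where "Jm = Jstar Df (u t) (U t) t"
    have tin: "t \<in> interior {0..T}" using t by simp
    have uv: "(u has_vector_derivative f (u t) t) (at t)"
      using u_ode[of t] t at_within_interior[OF tin] by auto
    have ud: "((\<lambda>s. u s $ i) has_real_derivative f (u t) t $ i) (at t)" for i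
      using bounded_linear.has_vector_derivative[OF bounded_linear_vec_nth uv]
      by (simp add: has_real_derivative_iff_has_vector_derivative)
    have pv: "(\<phi> has_vector_derivative - (Jm *v \<phi> t)) (at t)"
      using phi_ode[of t] t unfolding Jm_def S_def by auto
    have pd: "((\<lambda>s. \<phi> s $ i) has_real_derivative (- (Jm *v \<phi> t)) $ i) (at t)" for i
      using bounded_linear.has_vector_derivative[OF bounded_linear_vec_nth pv]
      by (simp add: has_real_derivative_iff_has_vector_derivative)
    have Hd: "(H i has_real_derivative ((deriv (\<lambda>s. U s $ i) t - f (u t) t $ i) * \<phi> t $ i
        + (U t $ i - u t $ i) * (- (Jm *v \<phi> t)) $ i)) (at t)" for i
    proof -
      obtain j where j: "j \<in> {1..M i}" "tp i (j - 1) < t" "t \<le> tp i j"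
        using part_locate[of "tp i" t "M i"] t part_start part_end by force
      have "t \<noteq> tp i j" using t j unfolding S_def by auto
      then have tj: "t < tp i j" using j by simp
      define Oi where "Oi = {tp i (j - 1)<..<tp i j}"
      have O: "open Oi" "t \<in> Oi" unfolding Oi_def using j tj by auto
      have Ut: "U t $ i = poly (P i j) t" using P[OF j(1)] j by auto
      have dU: "((\<lambda>s. U s $ i) has_real_derivative poly (pderiv (P i j)) t) (at t)"
        by (rule has_field_derivative_transform_within_open[OF poly_DERIV O]) (use P[OF j(1)] in \<open>auto simp: Oi_def\<close>)
      have deq: "deriv (\<lambda>s. U s $ i) t = poly (pderiv (P i j)) t"
        using DERIV_imp_deriv[OF dU] .
      have "(Hj i j has_real_derivative ((poly (pderiv (P i j)) t - f (u t) t $ i) * \<phi> t $ i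
        + (poly (P i j) t - u t $ i) * (- (Jm *v \<phi> t)) $ i)) (at t)"
        unfolding Hj_def by (auto intro!: derivative_eq_intros ud pd)
      then have "(H i has_real_derivative ((poly (pderiv (P i j)) t - f (u t) t $ i) * \<phi> t $ i
        + (poly (P i j) t - u t $ i) * (- (Jm *v \<phi> t)) $ i)) (at t)"
        by (rule has_field_derivative_transform_within_open[OF _ O]) (use C1a[OF j(1)] in \<open>auto simp: Oi_def\<close>)
      then show ?thesis using deq Ut by simp
    qed
    have Gd: "(G has_real_derivative (\<Sum>i\<in>UNIV. (deriv (\<lambda>s. U s $ i) t - f (u t) t $ i) * \<phi> t $ i
        + (U t $ i - u t $ i) * (- (Jm *v \<phi> t)) $ i)) (at t)"
      unfolding G_def by (rule DERIV_sum) (rule Hd)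
    have tT: "t \<in> {0<..T}" using t by auto
    have JI: "(U t - u t) \<bullet> (Jm *v \<phi> t) = (f (U t) t - f (u t) t) \<bullet> \<phi> t"
      unfolding Jm_def Jstar_def
      by (rule J_identity[where f = "\<lambda>x. f x t" and Df = "\<lambda>v. Df v t"]) (use f_deriv[OF tT] Df_cont[OF tT] in auto)
    have "(\<Sum>i\<in>UNIV. (deriv (\<lambda>s. U s $ i) t - f (u t) t $ i) * \<phi> t $ i
        + (U t $ i - u t $ i) * (- (Jm *v \<phi> t)) $ i)
      = (\<Sum>i\<in>UNIV. residual f U i t * \<phi> t $ i)
        + ((\<Sum>i\<in>UNIV. (f (U t) t $ i - f (u t) t $ i) * \<phi> t $ i)
        - (\<Sum>i\<in>UNIV. (U t $ i - u t $ i) * (Jm *v \<phi> t) $ i))"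
      unfolding residual_def by (simp add: sum.distrib[symmetric] sum_subtractf[symmetric] algebra_simps)
    also have "\<dots> = (\<Sum>i\<in>UNIV. residual f U i t * \<phi> t $ i)"
      using JI by (simp add: inner_vec_def)
    finally show ?thesis using Gd by (simp add: has_real_derivative_iff_has_vector_derivative)
  qed
  have ftc: "((\<lambda>t. \<Sum>i\<in>UNIV. residual f U i t * \<phi> t $ i) has_integral G T - G 0) {0..T}"
    by (rule fundamental_theorem_of_calculus_interior_strong[OF finS _ Gder Gcont])
       (use T_pos in auto)
  have dP: "\<forall>\<^sub>F s in nhds t. deriv (\<lambda>s. U s $ i) s = poly (pderiv (P i j)) s"
    if j: "j \<in> {1..M i}" "tp i (j - 1) < t" "t < tp i j" for i j t
  proof -
    define Oi where "Oi = {tp i (j - 1)<..<tp i j}"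
    have O: "open Oi" "t \<in> Oi" unfolding Oi_def using j by auto
    have "deriv (\<lambda>s. U s $ i) s = poly (pderiv (P i j)) s" if s: "s \<in> Oi" for s
    proof -
      have "((\<lambda>s. U s $ i) has_real_derivative poly (pderiv (P i j)) s) (at s)"
        by (rule has_field_derivative_transform_within_open[OF poly_DERIV O(1) s])
           (use P[OF j(1)] in \<open>auto simp: Oi_def\<close>)
      then show ?thesis by (rule DERIV_imp_deriv)
    qed
    then show ?thesis unfolding eventually_nhds using O by blast
  qed
  have Ucomp: "isCont (\<lambda>s. U s $ k) t" if t: "t \<in> {0<..<T} - S" for k t
  proof -
    obtain j where j: "j \<in> {1..M k}" "tp k (j - 1) < t" "t \<le> tp k j"
      using part_locate[of "tp k" t "M k"] t part_start part_end by force
    have "t \<noteq> tp k j" using t j unfolding S_def by auto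
    then have tj: "t < tp k j" using j by simp
    have "\<forall>\<^sub>F s in nhds t. poly (P k j) s = U s $ k"
      unfolding eventually_nhds using P[OF j(1)] j tj
      by (intro exI[of _ "{tp k (j - 1)<..<tp k j}"]) auto
    from isCont_cong[OF this] show ?thesis using poly_isCont[where p="P k j" and x=t] by simp
  qed
  have Ucont: "isCont U t" if t: "t \<in> {0<..<T} - S" for t
  proof -
    have "((\<lambda>s. \<chi> k. U s $ k) \<longlongrightarrow> (\<chi> k. U t $ k)) (at t)"
      by (rule tendsto_vec_lambda) (use Ucomp[OF t] in \<open>simp add: isCont_def\<close>)
    then show ?thesis by (simp add: isCont_def vec_lambda_eta)
  qed
  obtain L where L: "L-lipschitz_on (UNIV \<times> {0<..T}) (\<lambda>(v, t). f v t)" using f_lipschitz by blast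
  have fcont: "continuous_on (UNIV \<times> {0<..<T}) (\<lambda>(v, t). f v t)"
    by (rule continuous_on_subset[OF lipschitz_on_continuous_on[OF L]]) auto
  have fUcont: "isCont (\<lambda>s. f (U s) s) t" if t: "t \<in> {0<..<T} - S" for t
  proof -
    have "isCont (\<lambda>(v, t). f v t) (U t, t)"
      using fcont t by (subst (asm) continuous_on_eq_continuous_at) (auto intro: open_Times)
    moreover have "isCont (\<lambda>s. (U s, s)) t" using Ucont[OF t] by (intro continuous_intros) auto
    ultimately show ?thesis using isCont_o2[where f="\<lambda>s. (U s, s)" and a=t and g="\<lambda>(v, t). f v t"] by simp
  qed
  have phicont: "isCont \<phi> t" if t: "t \<in> {0<..<T} - S" for t
    using phi_ode[of t] t has_vector_derivative_continuous unfolding S_def by blast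
  obtain B where B: "\<forall>v. \<forall>t\<in>{0<..T}. norm (f v t) \<le> B" using f_bounded by blast
  obtain Phi where Phi: "\<forall>s\<in>{0..T}. norm (\<phi> s) \<le> Phi"
    using compact_imp_bounded[OF compact_continuous_image[OF phi_cont compact_Icc]]
    unfolding bounded_iff by auto
  have intg: "(\<lambda>t. residual f U i t * \<phi> t $ i) integrable_on {tp i (j - 1)..tp i j}"
    if j: "j \<in> {1..M i}" for i j
  proof -
    define a where "a = tp i (j - 1)"
    define b where "b = tp i j"
    have jm: "j - 1 \<le> M i" using j by (meson atLeastAtMost_iff diff_le_self order_trans)
    have ab: "0 \<le> a" "a < b" "b \<le> T"
      unfolding a_def b_def using tp0[OF jm] tp0[of j i] lt[of "j - 1" j i] j by auto
    define A where "A = {a<..<b} - S"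
    have Aopen: "open A" unfolding A_def using finS by (intro open_Diff finite_imp_closed) auto
    define R where "R = (\<lambda>t. residual f U i t * \<phi> t $ i)"
    have Rc: "isCont R t" if t: "t \<in> A" for t
    proof -
      have t': "t \<in> {0<..<T} - S" using t ab unfolding A_def by auto
      have "isCont (\<lambda>s. poly (pderiv (P i j)) s) t" by simp
      then have "isCont (\<lambda>s. deriv (\<lambda>s. U s $ i) s) t"
        using isCont_cong[OF dP[OF j, of t]] t unfolding A_def a_def b_def by auto
      then show ?thesis unfolding R_def residual_def
        using fUcont[OF t'] phicont[OF t'] by (intro continuous_intros) auto
    qed
    have Rm: "R \<in> borel_measurable (lebesgue_on A)"
      by (rule continuous_imp_measurable_on_sets_lebesgue)
         (use Rc Aopen in \<open>auto intro: continuous_at_imp_continuous_on borel_open\<close>)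
    have "bounded ((\<lambda>s. poly (pderiv (P i j)) s) ` {a..b})"
      by (intro compact_imp_bounded compact_continuous_image continuous_intros) auto
    then obtain C where "\<forall>x\<in>(\<lambda>s. poly (pderiv (P i j)) s) ` {a..b}. norm x \<le> C"
      unfolding bounded_iff by blast
    then have C: "\<forall>s\<in>{a..b}. norm (poly (pderiv (P i j)) s) \<le> C" by auto
    have Rb: "norm (R s) \<le> (C + B) * Phi" if s: "s \<in> A" for s
    proof -
      have sab: "s \<in> {a<..<b}" using s unfolding A_def by auto
      have "deriv (\<lambda>s. U s $ i) s = poly (pderiv (P i j)) s"
        using eventually_nhds_x_imp_x[OF dP[OF j, of s]] sab unfolding a_def b_def by auto
      then have d: "\<bar>deriv (\<lambda>s. U s $ i) s\<bar> \<le> C" using C sab by auto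
      have s0T: "s \<in> {0<..T}" "s \<in> {0..T}" using sab ab by auto
      have "norm (f (U s) s) \<le> B" using B s0T(1) by blast
      then have fb: "\<bar>f (U s) s $ i\<bar> \<le> B"
        using component_le_norm_cart[of "f (U s) s" i] by linarith
      have "norm (\<phi> s) \<le> Phi" using Phi s0T(2) by blast
      then have pb: "\<bar>\<phi> s $ i\<bar> \<le> Phi"
        using component_le_norm_cart[of "\<phi> s" i] by linarith
      have "norm (R s) = \<bar>deriv (\<lambda>s. U s $ i) s - f (U s) s $ i\<bar> * \<bar>\<phi> s $ i\<bar>"
        unfolding R_def residual_def by (simp add: abs_mult)
      also have "\<dots> \<le> (C + B) * Phi"
        using d fb pb by (intro mult_mono) auto
      finally show ?thesis .
    qed
    have neg: "negligible (({a..b} - A) \<union> (A - {a..b}))"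
      by (rule negligible_subset[of "insert a (insert b S)"]) (use finS in \<open>auto simp: A_def\<close>)
    have ci: "(\<lambda>_. (C + B) * Phi) integrable_on A"
      using integrable_spike_set_eq[OF neg] integrable_const_ivl by blast
    have "R integrable_on A"
      by (rule measurable_bounded_by_integrable_imp_integrable[OF Rm ci Rb])
         (use Aopen in \<open>auto intro: borel_open\<close>)
    then show ?thesis using integrable_spike_set_eq[OF neg] unfolding R_def a_def b_def by blast
  qed
  have hi: "((\<lambda>t. residual f U i t * \<phi> t $ i) has_integral
      (\<Sum>j = 1..M i. integral {tp i (j - 1)..tp i j} (\<lambda>t. residual f U i t * \<phi> t $ i))) {0..T}" for i
    using part_integral[of "M i" "tp i" "\<lambda>t. residual f U i t * \<phi> t $ i"] part_mono intg
      part_start part_end by auto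
  have hs: "((\<lambda>t. \<Sum>i\<in>UNIV. residual f U i t * \<phi> t $ i) has_integral
      (\<Sum>i\<in>UNIV. \<Sum>j = 1..M i. integral {tp i (j - 1)..tp i j} (\<lambda>t. residual f U i t * \<phi> t $ i))) {0..T}"
    by (rule has_integral_sum) (use hi in auto)
  have GT0: "G T - G 0 = (\<Sum>i\<in>UNIV. \<Sum>j = 1..M i. integral {tp i (j - 1)..tp i j} (\<lambda>t. residual f U i t * \<phi> t $ i))"
    using has_integral_unique[OF ftc hs] .
  have G0: "G 0 = 0" unfolding G_def H_def by simp
  have GT: "G T = norm (U T - u T) - (\<Sum>i\<in>UNIV. \<Sum>k<M i. jmp i k * \<phi> (tp i k) $ i)"
  proof -
    have set: "{k. k < M i \<and> tp i k < T} = {..<M i}" for i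
      using lt[of _ "M i" i] part_end by auto
    have HT: "H i T = (U T $ i - u T $ i) * \<phi> T $ i - (\<Sum>k<M i. jmp i k * \<phi> (tp i k) $ i)" for i
      unfolding H_def set using T_pos by simp
    have "(\<Sum>i\<in>UNIV. (U T $ i - u T $ i) * \<phi> T $ i) = (U T - u T) \<bullet> \<phi> T"
      by (simp add: inner_vec_def)
    also have "\<dots> = norm (U T - u T)"
      unfolding phi_final using eT_nz by (simp add: power2_norm_eq_inner[symmetric] power2_eq_square)
    finally show ?thesis unfolding G_def HT by (simp add: sum_subtractf)
  qed
  have re: "(\<Sum>j = 1..M i. jump U u0 i (j - 1) (tp i (j - 1)) * \<phi> (tp i (j - 1)) $ i)
      = (\<Sum>k<M i. jmp i k * \<phi> (tp i k) $ i)" for i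
    unfolding jmp_def by (simp add: sum.atLeast1_atMost_eq)
  have split: "(\<Sum>i\<in>UNIV. \<Sum>j = 1..M i.
       integral {tp i (j - 1)..tp i j} (\<lambda>t. residual f U i t * \<phi> t $ i)
       + jump U u0 i (j - 1) (tp i (j - 1)) * \<phi> (tp i (j - 1)) $ i)
    = (\<Sum>i\<in>UNIV. \<Sum>j = 1..M i. integral {tp i (j - 1)..tp i j} (\<lambda>t. residual f U i t * \<phi> t $ i))
      + (\<Sum>i\<in>UNIV. \<Sum>k<M i. jmp i k * \<phi> (tp i k) $ i)"
    by (simp only: sum.distrib re)
  show ?thesis
    unfolding split using GT0 G0 GT by linarith
qed
end
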